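(* For all integers $n,m$, \[\Phi_{n,m}(u,v;1,1;z,w;q)=\frac{\Phi_{n,m}(u,v;z,w;q)-zwq^{m-1}\Phi_{n,m}(u/z,v/w;z,w;q)}{1-zwq^{-1}}.\] In particular $\Phi_{n,m}(1,1;1,1;z,w;q)=\frac{1-zwq^{n+m-1}}{1-zwq^{-1}}\Phi_{n,m}(z,w;q)$.
   Context: For $n\in\mathbb{Z}$, $(a;q)_n=(a;q)_\infty/(aq^n;q)_\infty$ ($1/(q;q)_n=0$ for $n<0$), $(a_1,\dots,a_k;q)_n=\prod_i(a_i;q)_n$. $\Phi_{n,m}(z,w;q):=\frac{(zwq;q)_{n+m}}{(q,zq,zwq;q)_n(q,wq,zwq;q)_m}$. $\Phi_{n,m}(u,v;z,w;q):=\Phi_{n,m}(z/q,w;q)-\frac{uz}{(z;q)_2}\Phi_{n-1,m}(zq,w/q;q)+\frac{uvzw^2}{(w,zw;q)_2}\Phi_{n-1,m-1}(z,wq;q)$. With $Q=\{y\in\mathbb{Z}^3:y_1+y_2+y_3=0\}$, $\Phi_{n,m;y}(z,w;q):=\frac{(zwq;q)_{n+m}}{(q;q)_{n-y_1}(zq;q)_{n-y_2}(zwq;q)_{n-y_3}(q;q)_{m+y_3}(wq;q)_{m+y_2}(zwq;q)_{m+y_1}}$, and, with $\rho=(1,2,3)$, $\sigma\in S_3$ in one-line notation, $\chi$ the indicator, \[\Phi_{n,m}(u,v;c,d;z,w;q):=\sum_{\sigma\in S_3}\operatorname{sgn}(\sigma)(uz)^{\sigma_1-1}(v/d)^{\chi(\sigma_3=1)}(c/u)^{\chi(\sigma_1=3)}(dw)^{3-\sigma_3}\Phi_{n,m;\sigma-\rho}(z/q,w/q;q).\]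 *)

theory Defs
  imports Complex_Main "HOL-Combinatorics.Permutations"
begin

text \<open>q-Pochhammer symbol (a;q)_n for integer n, i.e. (a;q)_inf/(a q^n;q)_inf:
  for n >= 0 the finite product, for n < 0 the reciprocal of prod_{k=1}^{-n} (1 - a q^(-k)).
  Note: for n < 0, (q;q)_n contains the factor 1/(1-q^0) = 1/0, so (by HOL's convention
  1/0 = 0) the reciprocal 1/(q;q)_n evaluates to 0, matching the paper's convention.\<close>
definition qpoch :: "complex \<Rightarrow> complex \<Rightarrow> int \<Rightarrow> complex" where
  "qpoch a q n =
     (if 0 \<le> n then (\<Prod>k<nat n. (1 - a * q ^ k))
      else 1 / (\<Prod>k\<in>{1..nat (-n)}. (1 - a * q powi (- int k))))"

definition PhiA :: "int \<Rightarrow> int \<Rightarrow> complex \<Rightarrow> complex \<Rightarrow> complex \<Rightarrow> complex" where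
  "PhiA n m z w q =
     qpoch (z*w*q) q (n+m) /
     (qpoch q q n * qpoch (z*q) q n * qpoch (z*w*q) q n *
      qpoch q q m * qpoch (w*q) q m * qpoch (z*w*q) q m)"

definition PhiU :: "int \<Rightarrow> int \<Rightarrow> complex \<Rightarrow> complex \<Rightarrow> complex \<Rightarrow> complex \<Rightarrow> complex \<Rightarrow> complex" where
  "PhiU n m u v z w q =
     PhiA n m (z/q) w q
     - u*z / qpoch z q 2 * PhiA (n-1) m (z*q) (w/q) q
     + u*v*z*w^2 / (qpoch w q 2 * qpoch (z*w) q 2) * PhiA (n-1) (m-1) z (w*q) q"

definition PhiY :: "int \<Rightarrow> int \<Rightarrow> int \<Rightarrow> int \<Rightarrow> int \<Rightarrow> complex \<Rightarrow> complex \<Rightarrow> complex \<Rightarrow> complex" where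
  "PhiY n m y1 y2 y3 z w q =
     qpoch (z*w*q) q (n+m) /
     (qpoch q q (n-y1) * qpoch (z*q) q (n-y2) * qpoch (z*w*q) q (n-y3) *
      qpoch q q (m+y3) * qpoch (w*q) q (m+y2) * qpoch (z*w*q) q (m+y1))"

text \<open>Phi_{n,m}(u,v;c,d;z,w;q); permutations sigma of {1,2,3} in one-line notation
  (sigma 1, sigma 2, sigma 3), rho = (1,2,3).\<close>
definition PhiCD :: "int \<Rightarrow> int \<Rightarrow> complex \<Rightarrow> complex \<Rightarrow> complex \<Rightarrow> complex \<Rightarrow> complex \<Rightarrow> complex \<Rightarrow> complex \<Rightarrow> complex" where
  "PhiCD n m u v c d z w q =
     (\<Sum>\<sigma> \<in> {\<sigma>. \<sigma> permutes {1::int,2,3}}.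
        of_int (sign \<sigma>) * (u*z) ^ nat (\<sigma> 1 - 1)
        * (v/d) ^ (if \<sigma> 3 = 1 then 1 else 0)
        * (c/u) ^ (if \<sigma> 1 = 3 then 1 else 0)
        * (d*w) ^ nat (3 - \<sigma> 3)
        * PhiY n m (\<sigma> 1 - 1) (\<sigma> 2 - 2) (\<sigma> 3 - 3) (z/q) (w/q) q)"

end

theory Submission
  imports Defs "HOL-Combinatorics.Permutations"
begin


definition gen :: "complex \<Rightarrow> complex \<Rightarrow> bool" where
  "gen a q \<longleftrightarrow> (\<forall>k::int. a * q powi k \<noteq> 1)"

definition qneg :: "complex \<Rightarrow> complex \<Rightarrow> nat \<Rightarrow> complex" where
  "qneg a q M = (\<Prod>k\<in>{1..M}. (1 - a * q powi (- int k)))"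

lemma qneg_Suc: "qneg a q (Suc M) = qneg a q M * (1 - a * q powi (- int (Suc M)))"
  unfolding qneg_def by (simp add: prod.nat_ivl_Suc' mult.commute)

lemma qq: "(q::complex) \<noteq> 0 \<Longrightarrow> q * q powi k = q powi (k+1)"
  by (simp add: power_int_add_1')

lemma qneg_shift:
  assumes "q \<noteq> 0"
  shows "qneg (a*q) q (Suc M) = (1 - a) * qneg a q M"
proof (induction M)
  case 0 then show ?case using assms by (simp add: qneg_def power_int_minus)
next
  case (Suc M)
  have "a*q*q powi (- int (Suc (Suc M))) = a*(q*q powi (- int (Suc (Suc M))))" by simp
  also have "\<dots> = a * q powi (- int (Suc (Suc M)) + 1)" using qq[OF assms] by simp
  finally have e: "a*q*q powi (- int (Suc (Suc M))) = a * q powi (- int (Suc M))" by simp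
  have "qneg (a*q) q (Suc (Suc M)) = qneg (a*q) q (Suc M) * (1 - a * q powi (- int (Suc M)))"
    using qneg_Suc[of "a*q" q "Suc M"] e by simp
  also have "\<dots> = (1 - a) * qneg a q M * (1 - a * q powi (- int (Suc M)))" using Suc by simp
  also have "\<dots> = (1 - a) * qneg a q (Suc M)" by (simp add: qneg_Suc)
  finally show ?case .
qed

lemma qneg_nz: "gen a q \<Longrightarrow> qneg a q M \<noteq> 0"
  unfolding qneg_def gen_def by (auto simp: prod_zero_iff)

lemma qpoch_neg: "n < 0 \<Longrightarrow> qpoch a q n = 1 / qneg a q (nat (-n))"
  unfolding qpoch_def qneg_def by simp

lemma qpoch_pos: "0 \<le> n \<Longrightarrow> qpoch a q n = (\<Prod>k<nat n. (1 - a * q ^ k))"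
  unfolding qpoch_def by simp

lemma qp_nz:
  assumes "gen a q" shows "qpoch a q n \<noteq> 0"
proof (cases "0 \<le> n")
  case True
  have "a * q ^ k \<noteq> 1" for k using assms unfolding gen_def
    by (metis power_int_of_nat)
  then show ?thesis using True by (auto simp: qpoch_pos prod_zero_iff)
next
  case False then show ?thesis using qneg_nz[OF assms] by (simp add: qpoch_neg)
qed

lemma qp_succ:
  assumes q0: "q \<noteq> 0" and g: "gen a q"
  shows "qpoch a q (n+1) = qpoch a q n * (1 - a * q powi n)"
proof (cases "0 \<le> n")
  case True
  then have "nat (n+1) = Suc (nat n)" by simp
  then show ?thesis using True
    by (simp add: qpoch_pos power_int_def)
next
  case False
  define M where "M = nat (-n-1)"
  have nM: "nat (-n) = Suc M" "n = - int (Suc M)" using False by (auto simp: M_def)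
  have f: "1 - a * q powi n \<noteq> 0" using g unfolding gen_def by auto
  show ?thesis
  proof (cases "M = 0")
    case True
    then show ?thesis using nM f by (simp add: qpoch_neg qneg_def qpoch_def)
  next
    case False
    then have "n + 1 < 0" "nat (-(n+1)) = M" using nM by auto
    then show ?thesis using nM f qneg_nz[OF g, of M] by (simp add: qpoch_neg qneg_Suc)
  qed
qed

lemma qp_shift:
  assumes q0: "q \<noteq> 0" and g: "gen a q"
  shows "qpoch (a*q) q n = qpoch a q (n+1) / (1 - a)"
proof -
  have a1: "1 - a \<noteq> 0" using g unfolding gen_def by (metis power_int_0_right mult_1_right right_minus_eq)
  show ?thesis
  proof (cases "0 \<le> n")
    case True
    then have "nat (n+1) = Suc (nat n)" by simp
    then have "qpoch a q (n+1) = (\<Prod>k<Suc (nat n). 1 - a*q^k)" using True by (simp add: qpoch_pos)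
    also have "\<dots> = (1 - a) * (\<Prod>k<nat n. 1 - a*q^(Suc k))"
      by (subst prod.lessThan_Suc_shift) simp
    also have "(\<Prod>k<nat n. 1 - a*q^(Suc k)) = qpoch (a*q) q n" using True
      by (simp add: qpoch_pos mult.assoc)
    finally show ?thesis using a1 by simp
  next
    case False
    define M where "M = nat (-n-1)"
    have nM: "nat (-n) = Suc M" "n = - int (Suc M)" using False by (auto simp: M_def)
    show ?thesis
    proof (cases "M = 0")
      case True
      then show ?thesis using nM a1 q0 by (simp add: qpoch_neg qneg_def power_int_minus qpoch_def)
    next
      case False
      then have "n + 1 < 0" "nat (-(n+1)) = M" using nM by auto
      then show ?thesis using nM a1 qneg_nz[OF g, of M] q0 by (simp add: qpoch_neg qneg_shift)
    qed
  qed
qed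

lemma qneg_q0: "q \<noteq> 0 \<Longrightarrow> M \<ge> 1 \<Longrightarrow> qneg q q M = 0"
  unfolding qneg_def
  apply (rule prod_zero, simp)
  apply (rule bexI[where x=1])
   apply (simp add: power_int_minus)
  apply simp
  done

lemma iq_pred:
  assumes q0: "q \<noteq> 0" and qg: "\<forall>k::int. k \<noteq> 0 \<longrightarrow> q powi k \<noteq> 1"
  shows "inverse (qpoch q q (N - 1)) = (1 - q powi N) * inverse (qpoch q q N)"
proof (cases "1 \<le> N")
  case True
  then have s: "nat N = Suc (nat (N-1))" by simp
  then have "qpoch q q N = qpoch q q (N-1) * (1 - q * q^(nat (N-1)))" using True
    by (simp add: qpoch_pos)
  moreover have "q * q^(nat (N-1)) = q powi N" using True s
  proof -
    have "q powi N = q ^ nat N" using True by (simp add: power_int_def)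
    then show ?thesis using s by simp
  qed
  moreover have "1 - q powi N \<noteq> 0" using qg True by auto
  ultimately show ?thesis by (simp add: inverse_mult_distrib)
next
  case False
  have z: "qpoch q q (N-1) = 0"
    using False qneg_q0[OF q0, of "nat (-(N-1))"] by (simp add: qpoch_neg)
  show ?thesis
  proof (cases "N = 0")
    case True then show ?thesis using z by simp
  next
    case False
    then have "N < 0" using \<open>\<not> 1 \<le> N\<close> by simp
    then have "qpoch q q N = 0" using qneg_q0[OF q0, of "nat (-N)"] by (simp add: qpoch_neg)
    then show ?thesis using z by simp
  qed
qed



lemma gen_nz: "gen a q \<Longrightarrow> 1 - a \<noteq> 0"
  unfolding gen_def by (metis power_int_0_right mult_1_right right_minus_eq)

lemma gen_powi: "q \<noteq> 0 \<Longrightarrow> gen a q \<Longrightarrow> gen (a * q powi j) q"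
  unfolding gen_def by (metis mult.assoc power_int_add)

lemma gen_q: "q \<noteq> 0 \<Longrightarrow> gen a q \<Longrightarrow> gen (a * q) q"
  using gen_powi[of q a 1] by simp

lemma gen_dq: "q \<noteq> 0 \<Longrightarrow> gen a q \<Longrightarrow> gen (a / q) q"
  using gen_powi[of q a "-1"] by (simp add: power_int_minus divide_inverse)

lemma up2:
  assumes "q \<noteq> 0" "gen a q"
  shows "qpoch a q (N+2) = qpoch a q N * (1 - a * q powi N) * (1 - a * q * q powi N)"
proof -
  have "qpoch a q (N+2) = qpoch a q ((N+1)+1)" by (simp add: add.assoc)
  also have "\<dots> = qpoch a q N * (1 - a * q powi N) * (1 - a * q powi (N+1))"
    by (simp only: qp_succ[OF assms])
  also have "q powi (N+1) = q * q powi N" using assms(1) by (simp add: power_int_add_1')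
  finally show ?thesis by (simp add: mult.assoc)
qed

lemma dn1:
  assumes "q \<noteq> 0" "gen a q"
  shows "qpoch a q (N - 1) = qpoch a q N / (1 - a * q powi N / q)"
proof -
  have "qpoch a q N = qpoch a q ((N - 1) + 1)" by simp
  also have "\<dots> = qpoch a q (N - 1) * (1 - a * q powi (N - 1))"
    by (rule qp_succ[OF assms])
  also have "q powi (N - 1) = q powi N / q" using assms(1) by (simp add: power_int_diff)
  finally have e: "qpoch a q N = qpoch a q (N - 1) * (1 - a * q powi N / q)" by simp
  have "1 - a * q powi N / q \<noteq> 0"
    using gen_nz[OF gen_dq[OF assms(1) gen_powi[OF assms, of N]]] by simp
  then show ?thesis using e by simp
qed

lemma sh2:
  assumes "q \<noteq> 0" "gen a q"
  shows "qpoch (a*q*q) q M = qpoch a q (M+2) / ((1 - a) * (1 - a*q))"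
proof -
  have "qpoch (a*q*q) q M = qpoch (a*q) q (M+1) / (1 - a*q)"
    using qp_shift[OF assms(1) gen_q[OF assms]] by simp
  also have "qpoch (a*q) q (M+1) = qpoch a q (M+2) / (1 - a)"
    using qp_shift[OF assms, of "M+1"] by (simp add: add.assoc)
  finally show ?thesis by simp
qed

lemma sh3:
  assumes "q \<noteq> 0" "gen a q"
  shows "qpoch (a*q*q*q) q M = qpoch a q (M+3) / ((1 - a) * (1 - a*q) * (1 - a*q*q))"
proof -
  have "qpoch (a*q*q*q) q M = qpoch (a*q*q) q (M+1) / (1 - a*q*q)"
    using qp_shift[OF assms(1) gen_q[OF assms(1) gen_q[OF assms]]] by simp
  also have "qpoch (a*q*q) q (M+1) = qpoch a q (M+3) / ((1 - a) * (1 - a*q))"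
    using sh2[OF assms, of "M+1"] by (simp add: add.assoc)
  finally show ?thesis by simp
qed


lemma gen_nzs:
  assumes q0: "q \<noteq> 0" and g: "gen a q"
  shows "1 - a \<noteq> 0 \<and> 1 - a*q \<noteq> 0 \<and> 1 - a*q*q \<noteq> 0 \<and> 1 - a * q powi N \<noteq> 0"
    "1 - a * q * q powi N \<noteq> 0" "1 - a * q powi N / q \<noteq> 0" "qpoch a q N \<noteq> 0"
proof -
  show "1 - a \<noteq> 0 \<and> 1 - a*q \<noteq> 0 \<and> 1 - a*q*q \<noteq> 0 \<and> 1 - a * q powi N \<noteq> 0"
    using gen_nz[OF g] gen_nz[OF gen_q[OF q0 g]] gen_nz[OF gen_q[OF q0 gen_q[OF q0 g]]]
      gen_nz[OF gen_powi[OF q0 g]] by blast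
  show "1 - a * q * q powi N \<noteq> 0" by (rule gen_nz[OF gen_powi[OF q0 gen_q[OF q0 g]]])
  show "1 - a * q powi N / q \<noteq> 0" by (rule gen_nz[OF gen_dq[OF q0 gen_powi[OF q0 g]]])
  show "qpoch a q N \<noteq> 0" by (rule qp_nz[OF g])
qed

lemma shfacts:
  assumes q0: "q \<noteq> 0" and g: "gen a q"
  shows "qpoch a q (N+1) = qpoch a q N * (1 - a * q powi N)"
    "qpoch a q (N+2) = qpoch a q N * (1 - a * q powi N) * (1 - a * q * q powi N)"
    "qpoch a q (N-1) = qpoch a q N / (1 - a * q powi N / q)"
    "qpoch (a*q) q N = qpoch a q N * (1 - a * q powi N) / (1 - a)"
    "qpoch (a*q) q (N-1) = qpoch a q N / (1 - a)"
    "qpoch (a*q*q) q (N-1) = qpoch a q N * (1 - a * q powi N) / ((1 - a) * (1 - a*q))"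
    "qpoch (a*q*q) q N = qpoch a q N * (1 - a * q powi N) * (1 - a * q * q powi N) / ((1 - a) * (1 - a*q))"
    "qpoch (a*q*q*q) q (N-1) = qpoch a q N * (1 - a * q powi N) * (1 - a * q * q powi N) / ((1 - a) * (1 - a*q) * (1 - a*q*q))"
    "qpoch (a*q*q*q) q (N-2) = qpoch a q N * (1 - a * q powi N) / ((1 - a) * (1 - a*q) * (1 - a*q*q))"
proof -
  show 1: "qpoch a q (N+1) = qpoch a q N * (1 - a * q powi N)" by (rule qp_succ[OF q0 g])
  show 2: "qpoch a q (N+2) = qpoch a q N * (1 - a * q powi N) * (1 - a * q * q powi N)" by (rule up2[OF q0 g])
  show "qpoch a q (N-1) = qpoch a q N / (1 - a * q powi N / q)" by (rule dn1[OF q0 g])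
  show "qpoch (a*q) q N = qpoch a q N * (1 - a * q powi N) / (1 - a)"
    using qp_shift[OF q0 g, of N] 1 by simp
  show "qpoch (a*q) q (N-1) = qpoch a q N / (1 - a)"
    using qp_shift[OF q0 g, of "N-1"] by simp
  show "qpoch (a*q*q) q (N-1) = qpoch a q N * (1 - a * q powi N) / ((1 - a) * (1 - a*q))"
    using sh2[OF q0 g, of "N-1"] 1 by (simp add: add.commute add.left_commute)
  show "qpoch (a*q*q) q N = qpoch a q N * (1 - a * q powi N) * (1 - a * q * q powi N) / ((1 - a) * (1 - a*q))"
    using sh2[OF q0 g, of N] 2 by simp
  show "qpoch (a*q*q*q) q (N-1) = qpoch a q N * (1 - a * q powi N) * (1 - a * q * q powi N) / ((1 - a) * (1 - a*q) * (1 - a*q*q))"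
  proof -
    have "N - 1 + 3 = N + 2" by simp
    then show ?thesis using sh3[OF q0 g, of "N-1"] unfolding \<open>N - 1 + 3 = N + 2\<close> 2 by simp
  qed
  show "qpoch (a*q*q*q) q (N-2) = qpoch a q N * (1 - a * q powi N) / ((1 - a) * (1 - a*q) * (1 - a*q*q))"
  proof -
    have "N - 2 + 3 = N + 1" by simp
    then show ?thesis using sh3[OF q0 g, of "N-2"] unfolding \<open>N - 2 + 3 = N + 1\<close> 1 by simp
  qed
qed

lemma iqfacts:
  assumes q0: "q \<noteq> 0" and qg: "\<forall>k::int. k \<noteq> 0 \<longrightarrow> q powi k \<noteq> 1"
  shows "inverse (qpoch q q (N-1)) = (1 - q powi N) * inverse (qpoch q q N)"
    "inverse (qpoch q q (N-2)) = (1 - q powi N / q) * (1 - q powi N) * inverse (qpoch q q N)"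
proof -
  show 1: "inverse (qpoch q q (N-1)) = (1 - q powi N) * inverse (qpoch q q N)" by (rule iq_pred[OF q0 qg])
  have "inverse (qpoch q q (N-1-1)) = (1 - q powi (N-1)) * inverse (qpoch q q (N-1))" by (rule iq_pred[OF q0 qg])
  moreover have "q powi (N-1) = q powi N / q" using q0 by (simp add: power_int_diff)
  moreover have "N - 1 - 1 = N - 2" by simp
  ultimately show "inverse (qpoch q q (N-2)) = (1 - q powi N / q) * (1 - q powi N) * inverse (qpoch q q N)"
    using 1 by simp
qed


lemma sum3: "(\<Sum>\<sigma> \<in> {\<sigma>. \<sigma> permutes {1::int,2,3}}. f \<sigma>) =
  f id + f (transpose 2 3) + f (transpose 1 2) + f (transpose 1 2 \<circ> transpose 2 3)
  + f (transpose 1 3) + f (transpose 1 3 \<circ> transpose 2 3)"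
  apply (subst sum_over_permutations_insert, simp, simp)
  apply (subst sum_over_permutations_insert, simp, simp)
  apply (subst sum_over_permutations_insert, simp, simp)
  apply (simp add: algebra_simps)
  done

lemma PhiCD_expand:
  "PhiCD n m u v 1 1 z w q =
     PhiY n m 0 0 0 (z/q) (w/q) q - w * PhiY n m 0 1 (-1) (z/q) (w/q) q
   - u*z * PhiY n m 1 (-1) 0 (z/q) (w/q) q + u*z*v*w^2 * PhiY n m 1 1 (-2) (z/q) (w/q) q
   - u*z^2*v*w^2 * PhiY n m 2 0 (-2) (z/q) (w/q) q + u*z^2*w * PhiY n m 2 (-1) (-1) (z/q) (w/q) q"
  unfolding PhiCD_def sum3
  apply (simp add: sign_compose sign_swap_id permutation_swap_id transpose_def)
  apply (cases "u = 0", simp_all add: power2_eq_square)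
  done


lemma terms:
  fixes n m :: int and z w q :: complex
  assumes q0: "q \<noteq> 0" and qg: "\<forall>k::int. k \<noteq> 0 \<longrightarrow> q powi k \<noteq> 1"
    and gz: "gen z q" and gw: "gen w q" and gc: "gen (z*w/q) q"
  shows True
proof -
  define c where "c = z*w/q"
  have gc': "gen c q" using gc by (simp add: c_def)
  have e: "z/q*(w/q)*q = c" "z/q*q = z" "w/q*q = w" "z/q*w*q = c*q" "z*q*(w/q)*q = c*q*q"
     "z*(w*q)*q = c*q*q*q" "z*w*q = c*q*q" using q0 by (auto simp: c_def field_simps power2_eq_square)
  have idx: "n - 1 + (m - 1) = n + m - 2" "n - 1 + m = n + m - 1" by simp_all
  define X where "X = q powi n"
  define Y where "Y = q powi m"
  define Qn where "Qn = inverse (qpoch q q n)"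
  define Qm where "Qm = inverse (qpoch q q m)"
  have XY: "q powi (n+m) = X*Y" using q0 by (simp add: X_def Y_def power_int_add)
  note S = shfacts[OF q0 gz, of n, folded X_def] shfacts[OF q0 gw, of m, folded Y_def]
    shfacts[OF q0 gc', of n, folded X_def] shfacts[OF q0 gc', of m, folded Y_def]
    shfacts[OF q0 gc', of "n+m", unfolded XY]
    iqfacts[OF q0 qg, of n, folded X_def Qn_def] iqfacts[OF q0 qg, of m, folded Y_def Qm_def]
  note NZ0 = gen_nzs[OF q0 gz, of n, folded X_def] gen_nzs[OF q0 gw, of m, folded Y_def]
    gen_nzs[OF q0 gc', of n, folded X_def] gen_nzs[OF q0 gc', of m, folded Y_def]
    gen_nzs[OF q0 gc', of "n+m", unfolded XY]
  note NZ = NZ0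
  note atoms = XY X_def[symmetric] Y_def[symmetric] Qn_def[symmetric] Qm_def[symmetric]
  define K where "K = qpoch c q (n+m) * Qn * Qm * inverse (qpoch z q n) * inverse (qpoch w q m) * inverse (qpoch c q n) * inverse (qpoch c q m)"
  have T1: "PhiY n m 0 0 0 (z/q) (w/q) q = K * (1)"
    unfolding PhiY_def e idx
    apply (simp only: divide_inverse inverse_mult_distrib diff_0_right add_0_right diff_minus_eq_add add_uminus_conv_diff)
    apply (simp only: S)?
    apply (simp only: atoms)?
    unfolding K_def
    apply (simp add: divide_inverse inverse_mult_distrib mult_ac)
    done
  have T2: "PhiY n m 0 1 (-1) (z/q) (w/q) q = K * ((1 - Y)*(1 - z*X/q) / ((1 - c*X)*(1 - w*Y)))"
    unfolding PhiY_def e idx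
    apply (simp only: divide_inverse inverse_mult_distrib diff_0_right add_0_right diff_minus_eq_add add_uminus_conv_diff)
    apply (simp only: S)?
    apply (simp only: atoms)?
    unfolding K_def
    apply (simp add: divide_inverse inverse_mult_distrib mult_ac)
    done
  have T3: "PhiY n m 1 (-1) 0 (z/q) (w/q) q = K * ((1 - X)*(1 - w*Y/q) / ((1 - z*X)*(1 - c*Y)))"
    unfolding PhiY_def e idx
    apply (simp only: divide_inverse inverse_mult_distrib diff_0_right add_0_right diff_minus_eq_add add_uminus_conv_diff)
    apply (simp only: S)?
    apply (simp only: atoms)?
    unfolding K_def
    apply (simp add: divide_inverse inverse_mult_distrib mult_ac)
    done
  have T4: "PhiY n m 1 1 (-2) (z/q) (w/q) q = K * ((1 - X)*(1 - Y)*(1 - Y/q)*(1 - z*X/q) / ((1 - c*X)*(1 - c*q*X)*(1 - w*Y)*(1 - c*Y)))"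
    unfolding PhiY_def e idx
    apply (simp only: divide_inverse inverse_mult_distrib diff_0_right add_0_right diff_minus_eq_add add_uminus_conv_diff)
    apply (simp only: S)?
    apply (simp only: atoms)?
    unfolding K_def
    apply (simp add: divide_inverse inverse_mult_distrib mult_ac)
    done
  have T5: "PhiY n m 2 0 (-2) (z/q) (w/q) q = K * ((1 - X)*(1 - X/q)*(1 - Y)*(1 - Y/q) / ((1 - c*X)*(1 - c*q*X)*(1 - c*Y)*(1 - c*q*Y)))"
    unfolding PhiY_def e idx
    apply (simp only: divide_inverse inverse_mult_distrib diff_0_right add_0_right diff_minus_eq_add add_uminus_conv_diff)
    apply (simp only: S)?
    apply (simp only: atoms)?
    unfolding K_def
    apply (simp add: divide_inverse inverse_mult_distrib mult_ac)
    done
  have T6: "PhiY n m 2 (-1) (-1) (z/q) (w/q) q = K * ((1 - X)*(1 - X/q)*(1 - Y)*(1 - w*Y/q) / ((1 - z*X)*(1 - c*X)*(1 - c*Y)*(1 - c*q*Y)))"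
    unfolding PhiY_def e idx
    apply (simp only: divide_inverse inverse_mult_distrib diff_0_right add_0_right diff_minus_eq_add add_uminus_conv_diff)
    apply (simp only: S)?
    apply (simp only: atoms)?
    unfolding K_def
    apply (simp add: divide_inverse inverse_mult_distrib mult_ac)
    done
  have A1: "PhiA n m (z/q) w q = K * ((1 - c*X*Y)*(1 - c)*(1 - w)*(1 - c) / ((1 - c)*(1 - c*X)*(1 - w*Y)*(1 - c*Y)))"
    unfolding PhiA_def e idx
    apply (simp only: divide_inverse inverse_mult_distrib diff_0_right add_0_right diff_minus_eq_add add_uminus_conv_diff)
    apply (simp only: S)?
    apply (simp only: atoms)?
    unfolding K_def
    apply (simp add: divide_inverse inverse_mult_distrib mult_ac)
    done
  have A2: "PhiA (n-1) m (z*q) (w/q) q = K * ((1 - c*X*Y)*(1 - X)*(1 - z)*(1 - z*q)*(1 - c)*(1 - c*q)*(1 - c)*(1 - c*q) / ((1 - c)*(1 - c*q)*(1 - z*X)*(1 - c*X)*(1 - c*Y)*(1 - c*q*Y)))"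
    unfolding PhiA_def e idx
    apply (simp only: divide_inverse inverse_mult_distrib diff_0_right add_0_right diff_minus_eq_add add_uminus_conv_diff)
    apply (simp only: S)?
    apply (simp only: atoms)?
    unfolding K_def
    apply (simp add: divide_inverse inverse_mult_distrib mult_ac)
    done
  have A3: "PhiA (n-1) (m-1) z (w*q) q = K * ((1 - c*X*Y)*(1 - X)*(1 - Y)*(1 - z)*(1 - c)*(1 - c*q)*(1 - c*q*q)*(1 - w)*(1 - w*q)*(1 - c)*(1 - c*q)*(1 - c*q*q) / ((1 - c)*(1 - c*q)*(1 - c*q*q)*(1 - c*X)*(1 - c*q*X)*(1 - w*Y)*(1 - c*Y)*(1 - c*q*Y)))"
    unfolding PhiA_def e idx
    apply (simp only: divide_inverse inverse_mult_distrib diff_0_right add_0_right diff_minus_eq_add add_uminus_conv_diff)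
    apply (simp only: S)?
    apply (simp only: atoms)?
    unfolding K_def
    apply (simp add: divide_inverse inverse_mult_distrib mult_ac)
    done
  have A4: "PhiA n m z w q = K * ((1 - c*X*Y)*(1 - c*q*X*Y)*(1 - z)*(1 - c)*(1 - c*q)*(1 - w)*(1 - c)*(1 - c*q) / ((1 - c)*(1 - c*q)*(1 - z*X)*(1 - c*X)*(1 - c*q*X)*(1 - w*Y)*(1 - c*Y)*(1 - c*q*Y)))"
    unfolding PhiA_def e idx
    apply (simp only: divide_inverse inverse_mult_distrib diff_0_right add_0_right diff_minus_eq_add add_uminus_conv_diff)
    apply (simp only: S)?
    apply (simp only: atoms)?
    unfolding K_def
    apply (simp add: divide_inverse inverse_mult_distrib mult_ac)
    done
  show True by simp
qed





lemma I0a: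
  fixes w U G R H V E3 Wm Q :: complex
  assumes nz: "R \<noteq> 0" "H \<noteq> 0" "Q \<noteq> 0" "E3 \<noteq> 0" and core: "R*H - w*U*G = V*Wm"
  shows "1 - w*(U*G/(R*H)) = Q*(V*E3*Wm*E3/(E3*R*H*Q))/E3"
proof -
  have "1 - w*(U*G/(R*H)) = (R*H - w*U*G)/(R*H)" using nz by (simp add: field_simps)
  also have "\<dots> = V*Wm/(R*H)" using core by simp
  also have "\<dots> = Q*(V*E3*Wm*E3/(E3*R*H*Q))/E3" using nz by (simp add: field_simps)
  finally show ?thesis .
qed

lemma I1a:
  fixes z w A B P Q R S T U V W E1 E2 E3 :: complex
  assumes nz: "P \<noteq> 0" "Q \<noteq> 0" "R \<noteq> 0" "S \<noteq> 0" "E1 \<noteq> 0" "E2 \<noteq> 0" "E3 \<noteq> 0" "W \<noteq> 0"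
    and core: "R*S - z*w*T*U = V*W"
  shows "- z*(A*B/(P*Q)) + z*z*w*(A*T*U*B/(P*R*Q*S)) = - z*B*(V*A*E1*E2*E3*W*E3*W/(E3*W*P*R*Q*S))/(E1*E2*E3)"
proof -
  have "- z*(A*B/(P*Q)) + z*z*w*(A*T*U*B/(P*R*Q*S)) = - z*A*B*(R*S - z*w*T*U)/(P*Q*R*S)"
    using nz by (simp add: field_simps)
  also have "\<dots> = - z*A*B*(V*W)/(P*Q*R*S)" using core by simp
  also have "\<dots> = - z*B*(V*A*E1*E2*E3*W*E3*W/(E3*W*P*R*Q*S))/(E1*E2*E3)" using nz by (simp add: field_simps)
  finally show ?thesis .
qed

lemma I2a:
  fixes z w A U T' G R R2 H Q T S V E1 E3 W W2 Wm Wq :: complex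
  assumes nz: "R \<noteq> 0" "R2 \<noteq> 0" "H \<noteq> 0" "Q \<noteq> 0" "S \<noteq> 0" "E3 \<noteq> 0" "W \<noteq> 0" "W2 \<noteq> 0" "Wm \<noteq> 0" "Wq \<noteq> 0"
    and core: "G*S - z*T*H = V*E1"
  shows "z*w*w*(A*U*T'*G/(R*R2*H*Q)) - z*z*w*w*(A*T*U*T'/(R*R2*Q*S))
    = z*w*w*T'*(V*A*U*E1*E3*W*W2*Wm*Wq*E3*W*W2/(E3*W*W2*R*R2*H*Q*S))/(Wm*Wq*W*W2*E3)"
proof -
  have "z*w*w*(A*U*T'*G/(R*R2*H*Q)) - z*z*w*w*(A*T*U*T'/(R*R2*Q*S)) = z*w*w*A*U*T'*(G*S - z*T*H)/(R*R2*H*Q*S)"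
    using nz by (simp add: field_simps)
  also have "\<dots> = z*w*w*A*U*T'*(V*E1)/(R*R2*H*Q*S)" using core by simp
  also have "\<dots> = z*w*w*T'*(V*A*U*E1*E3*W*W2*Wm*Wq*E3*W*W2/(E3*W*W2*R*R2*H*Q*S))/(Wm*Wq*W*W2*E3)" using nz by (simp add: field_simps)
  finally show ?thesis .
qed


lemma I3a:
  fixes z w A U T' G R R2 H Q T S V V2 P B E1 E2 E3 W W2 Wm Wq :: complex
  assumes nz: "P \<noteq> 0" "R \<noteq> 0" "R2 \<noteq> 0" "H \<noteq> 0" "Q \<noteq> 0" "S \<noteq> 0" "E1 \<noteq> 0" "E2 \<noteq> 0" "E3 \<noteq> 0" "W \<noteq> 0" "W2 \<noteq> 0" "Wm \<noteq> 0" "Wq \<noteq> 0"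
    and core: "Q*Wm*P*R2*S - z*B*A*W*R2*H + z*w*w*T'*A*U*E1*P = V*V2*E1*W*Wm"
  shows "Q*(V*E3*Wm*E3/(E3*R*H*Q))/E3 - z*B*(V*A*E1*E2*E3*W*E3*W/(E3*W*P*R*Q*S))/(E1*E2*E3)
     + z*w*w*T'*(V*A*U*E1*E3*W*W2*Wm*Wq*E3*W*W2/(E3*W*W2*R*R2*H*Q*S))/(Wm*Wq*W*W2*E3)
    = V*(V*V2*E1*E3*W*Wm*E3*W/(E3*W*P*R*R2*H*Q*S))/E3"
proof -
  have "Q*(V*E3*Wm*E3/(E3*R*H*Q))/E3 - z*B*(V*A*E1*E2*E3*W*E3*W/(E3*W*P*R*Q*S))/(E1*E2*E3)
     + z*w*w*T'*(V*A*U*E1*E3*W*W2*Wm*Wq*E3*W*W2/(E3*W*W2*R*R2*H*Q*S))/(Wm*Wq*W*W2*E3)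
     = V*(Q*Wm*P*R2*S - z*B*A*W*R2*H + z*w*w*T'*A*U*E1*P)/(P*R*R2*H*Q*S)"
    using nz by (simp add: field_simps)
  also have "\<dots> = V*(V*V2*E1*W*Wm)/(P*R*R2*H*Q*S)" using core by simp
  also have "\<dots> = V*(V*V2*E1*E3*W*Wm*E3*W/(E3*W*P*R*R2*H*Q*S))/E3" using nz by (simp add: field_simps)
  finally show ?thesis .
qed

lemma comb:
  fixes K pA pB pC u v z w q Y D1 D2 E3 :: complex
  assumes "q \<noteq> 0" "z \<noteq> 0" "w \<noteq> 0" "D1 \<noteq> 0" "D2 \<noteq> 0" "E3 \<noteq> 0"
  shows "K*((1 - z*w/q*Y)*pA/E3 + u*(- z*(1 - w*Y/q)*pB/(D1*E3)) + u*v*(z*w*w*(1 - Y/q)*pC/(D2*E3)))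
    = ((K*pA - u*z/D1*(K*pB) + u*v*z*w^2/D2*(K*pC)) - z*w*(Y/q)*(K*pA - u/z*z/D1*(K*pB) + u/z*(v/w)*z*w^2/D2*(K*pC)))/E3"
  using assms by (simp add: field_simps power2_eq_square)

lemma q2: "qpoch a q 2 = (1 - a) * (1 - a*q)"
  unfolding qpoch_def by (simp add: numeral_2_eq_2)


lemma main_nm:
  fixes n m :: int and u v z w q :: complex
  assumes q0: "q \<noteq> 0" and qg: "\<forall>k::int. k \<noteq> 0 \<longrightarrow> q powi k \<noteq> 1"
    and gz: "gen z q" and gw: "gen w q" and gc: "gen (z*w/q) q" and z0: "z \<noteq> 0" and w0: "w \<noteq> 0"
  shows "PhiCD n m u v 1 1 z w q =
             (PhiU n m u v z w q - z * w * q powi (m - 1) * PhiU n m (u/z) (v/w) z w q)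
             / (1 - z * w / q)
         \<and> PhiCD n m 1 1 1 1 z w q =
             (1 - z * w * q powi (n + m - 1)) / (1 - z * w / q) * PhiA n m z w q"
proof -
  define c where "c = z*w/q"
  have gc': "gen c q" using gc by (simp add: c_def)
  have e: "z/q*(w/q)*q = c" "z/q*q = z" "w/q*q = w" "z/q*w*q = c*q" "z*q*(w/q)*q = c*q*q"
     "z*(w*q)*q = c*q*q*q" "z*w*q = c*q*q" using q0 by (auto simp: c_def field_simps power2_eq_square)
  have idx: "n - 1 + (m - 1) = n + m - 2" "n - 1 + m = n + m - 1" by simp_all
  define X where "X = q powi n"
  define Y where "Y = q powi m"
  define Qn where "Qn = inverse (qpoch q q n)"
  define Qm where "Qm = inverse (qpoch q q m)"
  have XY: "q powi (n+m) = X*Y" using q0 by (simp add: X_def Y_def power_int_add)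
  note S = shfacts[OF q0 gz, of n, folded X_def] shfacts[OF q0 gw, of m, folded Y_def]
    shfacts[OF q0 gc', of n, folded X_def] shfacts[OF q0 gc', of m, folded Y_def]
    shfacts[OF q0 gc', of "n+m", unfolded XY]
    iqfacts[OF q0 qg, of n, folded X_def Qn_def] iqfacts[OF q0 qg, of m, folded Y_def Qm_def]
  note NZ = gen_nzs[OF q0 gz, of n, folded X_def] gen_nzs[OF q0 gw, of m, folded Y_def]
    gen_nzs[OF q0 gc', of n, folded X_def] gen_nzs[OF q0 gc', of m, folded Y_def]
  note atoms = XY X_def[symmetric] Y_def[symmetric] Qn_def[symmetric] Qm_def[symmetric]
  define K where "K = qpoch c q (n+m) * Qn * Qm * inverse (qpoch z q n) * inverse (qpoch w q m) * inverse (qpoch c q n) * inverse (qpoch c q m)"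
  define r2 where "r2 = (1 - Y)*(1 - z*X/q) / ((1 - c*X)*(1 - w*Y))"
  define r3 where "r3 = (1 - X)*(1 - w*Y/q) / ((1 - z*X)*(1 - c*Y))"
  define r4 where "r4 = (1 - X)*(1 - Y)*(1 - Y/q)*(1 - z*X/q) / ((1 - c*X)*(1 - c*q*X)*(1 - w*Y)*(1 - c*Y))"
  define r5 where "r5 = (1 - X)*(1 - X/q)*(1 - Y)*(1 - Y/q) / ((1 - c*X)*(1 - c*q*X)*(1 - c*Y)*(1 - c*q*Y))"
  define r6 where "r6 = (1 - X)*(1 - X/q)*(1 - Y)*(1 - w*Y/q) / ((1 - z*X)*(1 - c*X)*(1 - c*Y)*(1 - c*q*Y))"
  define a1 where "a1 = (1 - c*X*Y)*(1 - c)*(1 - w)*(1 - c) / ((1 - c)*(1 - c*X)*(1 - w*Y)*(1 - c*Y))"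
  define a2 where "a2 = (1 - c*X*Y)*(1 - X)*(1 - z)*(1 - z*q)*(1 - c)*(1 - c*q)*(1 - c)*(1 - c*q) / ((1 - c)*(1 - c*q)*(1 - z*X)*(1 - c*X)*(1 - c*Y)*(1 - c*q*Y))"
  define a3 where "a3 = (1 - c*X*Y)*(1 - X)*(1 - Y)*(1 - z)*(1 - c)*(1 - c*q)*(1 - c*q*q)*(1 - w)*(1 - w*q)*(1 - c)*(1 - c*q)*(1 - c*q*q) / ((1 - c)*(1 - c*q)*(1 - c*q*q)*(1 - c*X)*(1 - c*q*X)*(1 - w*Y)*(1 - c*Y)*(1 - c*q*Y))"
  define a4 where "a4 = (1 - c*X*Y)*(1 - c*q*X*Y)*(1 - z)*(1 - c)*(1 - c*q)*(1 - w)*(1 - c)*(1 - c*q) / ((1 - c)*(1 - c*q)*(1 - z*X)*(1 - c*X)*(1 - c*q*X)*(1 - w*Y)*(1 - c*Y)*(1 - c*q*Y))"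
  have T1: "PhiY n m 0 0 0 (z/q) (w/q) q = K * 1"
    unfolding PhiY_def e idx 
    apply (simp only: divide_inverse inverse_mult_distrib diff_0_right add_0_right diff_minus_eq_add add_uminus_conv_diff)
    apply (simp only: S)?
    apply (simp only: atoms)?
    unfolding K_def
    apply (simp add: divide_inverse inverse_mult_distrib mult_ac)
    done
  have T2: "PhiY n m 0 1 (-1) (z/q) (w/q) q = K * r2"
    unfolding PhiY_def e idx r2_def
    apply (simp only: divide_inverse inverse_mult_distrib diff_0_right add_0_right diff_minus_eq_add add_uminus_conv_diff)
    apply (simp only: S)?
    apply (simp only: atoms)?
    unfolding K_def
    apply (simp add: divide_inverse inverse_mult_distrib mult_ac)
    done
  have T3: "PhiY n m 1 (-1) 0 (z/q) (w/q) q = K * r3"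
    unfolding PhiY_def e idx r3_def
    apply (simp only: divide_inverse inverse_mult_distrib diff_0_right add_0_right diff_minus_eq_add add_uminus_conv_diff)
    apply (simp only: S)?
    apply (simp only: atoms)?
    unfolding K_def
    apply (simp add: divide_inverse inverse_mult_distrib mult_ac)
    done
  have T4: "PhiY n m 1 1 (-2) (z/q) (w/q) q = K * r4"
    unfolding PhiY_def e idx r4_def
    apply (simp only: divide_inverse inverse_mult_distrib diff_0_right add_0_right diff_minus_eq_add add_uminus_conv_diff)
    apply (simp only: S)?
    apply (simp only: atoms)?
    unfolding K_def
    apply (simp add: divide_inverse inverse_mult_distrib mult_ac)
    done
  have T5: "PhiY n m 2 0 (-2) (z/q) (w/q) q = K * r5"
    unfolding PhiY_def e idx r5_def
    apply (simp only: divide_inverse inverse_mult_distrib diff_0_right add_0_right diff_minus_eq_add add_uminus_conv_diff)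
    apply (simp only: S)?
    apply (simp only: atoms)?
    unfolding K_def
    apply (simp add: divide_inverse inverse_mult_distrib mult_ac)
    done
  have T6: "PhiY n m 2 (-1) (-1) (z/q) (w/q) q = K * r6"
    unfolding PhiY_def e idx r6_def
    apply (simp only: divide_inverse inverse_mult_distrib diff_0_right add_0_right diff_minus_eq_add add_uminus_conv_diff)
    apply (simp only: S)?
    apply (simp only: atoms)?
    unfolding K_def
    apply (simp add: divide_inverse inverse_mult_distrib mult_ac)
    done
  have A1: "PhiA n m (z/q) w q = K * a1"
    unfolding PhiA_def e idx a1_def
    apply (simp only: divide_inverse inverse_mult_distrib diff_0_right add_0_right diff_minus_eq_add add_uminus_conv_diff)
    apply (simp only: S)?
    apply (simp only: atoms)?
    unfolding K_def
    apply (simp add: divide_inverse inverse_mult_distrib mult_ac)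
    done
  have A2: "PhiA (n-1) m (z*q) (w/q) q = K * a2"
    unfolding PhiA_def e idx a2_def
    apply (simp only: divide_inverse inverse_mult_distrib diff_0_right add_0_right diff_minus_eq_add add_uminus_conv_diff)
    apply (simp only: S)?
    apply (simp only: atoms)?
    unfolding K_def
    apply (simp add: divide_inverse inverse_mult_distrib mult_ac)
    done
  have A3: "PhiA (n-1) (m-1) z (w*q) q = K * a3"
    unfolding PhiA_def e idx a3_def
    apply (simp only: divide_inverse inverse_mult_distrib diff_0_right add_0_right diff_minus_eq_add add_uminus_conv_diff)
    apply (simp only: S)?
    apply (simp only: atoms)?
    unfolding K_def
    apply (simp add: divide_inverse inverse_mult_distrib mult_ac)
    done
  have A4: "PhiA n m z w q = K * a4"
    unfolding PhiA_def e idx a4_def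
    apply (simp only: divide_inverse inverse_mult_distrib diff_0_right add_0_right diff_minus_eq_add add_uminus_conv_diff)
    apply (simp only: S)?
    apply (simp only: atoms)?
    unfolding K_def
    apply (simp add: divide_inverse inverse_mult_distrib mult_ac)
    done

  have nzs: "1 - c \<noteq> 0" "1 - c*q \<noteq> 0" "1 - c*q*q \<noteq> 0" "1 - c*X \<noteq> 0" "1 - c*q*X \<noteq> 0"
      "1 - c*Y \<noteq> 0" "1 - c*q*Y \<noteq> 0" "1 - z*X \<noteq> 0" "1 - z \<noteq> 0" "1 - z*q \<noteq> 0"
      "1 - w \<noteq> 0" "1 - w*q \<noteq> 0" "1 - w*Y \<noteq> 0"
    using NZ by simp_all
  have core0: "(1 - c*X)*(1 - w*Y) - w*(1 - Y)*(1 - z*X/q) = (1 - c*X*Y)*(1 - w)"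
    unfolding c_def using q0 by (simp add: field_simps; algebra?)
  have core1: "(1 - c*X)*(1 - c*q*Y) - z*w*(1 - X/q)*(1 - Y) = (1 - c*X*Y)*(1 - c*q)"
    unfolding c_def using q0 by (simp add: field_simps; algebra?)
  have core2: "(1 - z*X/q)*(1 - c*q*Y) - z*(1 - X/q)*(1 - w*Y) = (1 - c*X*Y)*(1 - z)"
    unfolding c_def using q0 by (simp add: field_simps; algebra?)
  have core3: "(1 - c*Y)*(1 - w)*(1 - z*X)*(1 - c*q*X)*(1 - c*q*Y) - z*(1 - w*Y/q)*(1 - X)*(1 - c*q)*(1 - c*q*X)*(1 - w*Y)
      + z*w*w*(1 - Y/q)*(1 - X)*(1 - Y)*(1 - z)*(1 - z*X) = (1 - c*X*Y)*(1 - c*q*X*Y)*(1 - z)*(1 - c*q)*(1 - w)"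
    unfolding c_def using q0 by (simp add: field_simps; algebra?)
  have i0: "1 - w*r2 = (1 - c*Y)*a1/(1 - c)"
    unfolding r2_def a1_def by (rule I0a) (use nzs core0 in auto)
  have i1: "- z*r3 + z*z*w*r6 = - z*(1 - w*Y/q)*a2/((1 - z)*(1 - z*q)*(1 - c))"
    unfolding r3_def r6_def a2_def by (rule I1a) (use nzs core1 in auto)
  have i2: "z*w*w*r4 - z*z*w*w*r5 = z*w*w*(1 - Y/q)*a3/((1 - w)*(1 - w*q)*(1 - c*q)*(1 - c*q*q)*(1 - c))"
    unfolding r4_def r5_def a3_def by (rule I2a) (use nzs core2 in auto)
  have i3: "(1 - c*Y)*a1/(1 - c) - z*(1 - w*Y/q)*a2/((1 - z)*(1 - z*q)*(1 - c))
     + z*w*w*(1 - Y/q)*a3/((1 - w)*(1 - w*q)*(1 - c*q)*(1 - c*q*q)*(1 - c)) = (1 - c*X*Y)*a4/(1 - c)"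
    unfolding a1_def a2_def a3_def a4_def by (rule I3a) (use nzs core3 in auto)
  have cd: "PhiCD n m u v 1 1 z w q = K*((1 - w*r2) + u*(- z*r3 + z*z*w*r6) + u*v*(z*w*w*r4 - z*z*w*w*r5))" for u v
    unfolding PhiCD_expand T1 T2 T3 T4 T5 T6 by (simp add: algebra_simps power2_eq_square)
  define D1 where "D1 = (1 - z)*(1 - z*q)"
  define D2 where "D2 = (1 - w)*(1 - w*q)*(1 - c*q)*(1 - c*q*q)"
  have zwc: "z*w = c*q" using q0 by (simp add: c_def)
  have d2e: "(1 - w)*(1 - w*q)*((1 - z*w)*(1 - z*w*q)) = D2" unfolding D2_def using zwc by simp
  have pu: "PhiU n m u v z w q = K*a1 - u*z/D1*(K*a2) + u*v*z*w^2/D2*(K*a3)" for u v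
    unfolding PhiU_def A1 A2 A3 q2 D1_def d2e[symmetric] ..
  have pm: "q powi (m-1) = Y/q" using q0 by (simp add: Y_def power_int_diff)
  have pnm: "q powi (n+m-1) = X*Y/q" using q0 XY by (simp add: power_int_diff)
  have ec: "z*w/q*Y = c*Y" "1 - z*w/q = 1 - c" by (simp_all add: c_def)
  have D1nz: "D1 \<noteq> 0" and D2nz: "D2 \<noteq> 0" unfolding D1_def D2_def using nzs by simp_all
  have CB: "K*((1 - c*Y)*a1/(1 - c) + u*(- z*(1 - w*Y/q)*a2/(D1*(1 - c))) + u*v*(z*w*w*(1 - Y/q)*a3/(D2*(1 - c))))
    = ((K*a1 - u*z/D1*(K*a2) + u*v*z*w^2/D2*(K*a3)) - z*w*(Y/q)*(K*a1 - u/z*z/D1*(K*a2) + u/z*(v/w)*z*w^2/D2*(K*a3)))/(1 - c)"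
    using comb[OF q0 z0 w0 D1nz D2nz nzs(1), where K=K and pA=a1 and pB=a2 and pC=a3 and u=u and v=v and Y=Y] unfolding ec .
  have i1': "- z*r3 + z*z*w*r6 = - z*(1 - w*Y/q)*a2/(D1*(1 - c))" using i1 by (simp add: D1_def)
  have i2': "z*w*w*r4 - z*z*w*w*r5 = z*w*w*(1 - Y/q)*a3/(D2*(1 - c))" using i2 by (simp add: D2_def)
  have i3': "(1 - c*Y)*a1/(1 - c) + 1*(- z*(1 - w*Y/q)*a2/(D1*(1 - c))) + 1*1*(z*w*w*(1 - Y/q)*a3/(D2*(1 - c)))
     = (1 - c*X*Y)*a4/(1 - c)" using i3 by (simp add: D1_def D2_def)
  show ?thesis
  proof
    show "PhiCD n m u v 1 1 z w q =
             (PhiU n m u v z w q - z * w * q powi (m - 1) * PhiU n m (u/z) (v/w) z w q)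
             / (1 - z * w / q)"
      unfolding cd i0 i1' i2' CB pu pm ec by simp
    show "PhiCD n m 1 1 1 1 z w q =
             (1 - z * w * q powi (n + m - 1)) / (1 - z * w / q) * PhiA n m z w q"
    proof -
      have "PhiCD n m 1 1 1 1 z w q = K*((1 - c*X*Y)*a4/(1 - c))"
        unfolding cd i0 i1' i2' i3' ..
      also have "\<dots> = (1 - z * w * q powi (n + m - 1)) / (1 - z * w / q) * PhiA n m z w q"
        unfolding A4 pnm ec(2) using q0 zwc by (simp add: field_simps)
      finally show ?thesis .
    qed
  qed
qed


lemma gen_from:
  fixes a q :: complex
  assumes q0: "q \<noteq> 0" and ag: "\<forall>k::int. a \<noteq> q powi k"
  shows "gen a q"
  unfolding gen_def
proof
  fix k :: int
  show "a * q powi k \<noteq> 1"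
  proof
    assume h: "a * q powi k = 1"
    have "q powi k \<noteq> 0" using q0 by simp
    then have "a = inverse (q powi k)" using h by (simp add: field_simps)
    then have "a = q powi (-k)" by (simp add: power_int_minus)
    then show False using ag by blast
  qed
qed

theorem lemma4p8:
  fixes u v z w q :: complex
  assumes q0: "q \<noteq> 0"
    and qgen: "\<forall>k::int. k \<noteq> 0 \<longrightarrow> q powi k \<noteq> 1"
    and z0: "z \<noteq> 0" and w0: "w \<noteq> 0"
    and zgen: "\<forall>k::int. z \<noteq> q powi k"
    and wgen: "\<forall>k::int. w \<noteq> q powi k"
    and zwgen: "\<forall>k::int. z * w \<noteq> q powi k"
  shows "\<forall>n m :: int.
           PhiCD n m u v 1 1 z w q =
             (PhiU n m u v z w q - z * w * q powi (m - 1) * PhiU n m (u/z) (v/w) z w q)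
             / (1 - z * w / q)
         \<and> PhiCD n m 1 1 1 1 z w q =
             (1 - z * w * q powi (n + m - 1)) / (1 - z * w / q) * PhiA n m z w q"
proof (intro allI)
  fix n m :: int
  have gz: "gen z q" by (rule gen_from[OF q0 zgen])
  have gw: "gen w q" by (rule gen_from[OF q0 wgen])
  have "\<forall>k::int. z*w/q \<noteq> q powi k"
  proof
    fix k :: int
    show "z*w/q \<noteq> q powi k"
    proof
      assume "z*w/q = q powi k"
      then have "z*w = q powi k * q" using q0 by (simp add: field_simps)
      also have "\<dots> = q powi (k+1)" using q0 by (simp add: power_int_add_1)
      finally show False using zwgen by blast
    qed
  qed
  then have gc: "gen (z*w/q) q" by (rule gen_from[OF q0])
  show "PhiCD n m u v 1 1 z w q =
             (PhiU n m u v z w q - z * w * q powi (m - 1) * PhiU n m (u/z) (v/w) z w q)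
             / (1 - z * w / q)
         \<and> PhiCD n m 1 1 1 1 z w q =
             (1 - z * w * q powi (n + m - 1)) / (1 - z * w / q) * PhiA n m z w q"
    by (rule main_nm[OF q0 qgen gz gw gc z0 w0])
qed

end
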